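(* Let $q\ge5$ and let $\mathcal O$ be a $G_q$-orbit of $E_{n\Gamma}$-lines. Then $\Pi_{\overline{1_{\mathcal C}}}+2\Pi_{2_{\mathcal C}}+3\Pi_{3_{\mathcal C}}=q+1$ and $\Pi_{0_{\mathcal C}}=\Pi_{2_{\mathcal C}}+2\Pi_{3_{\mathcal C}}$ for all $q$; and if $q\not\equiv0\pmod3$, then $P_{1_\Gamma}+2P_T+3P_{3_\Gamma}=q+1$ and $P_{0_\Gamma}=P_T+2P_{3_\Gamma}$.
   Context: Let $\mathbb F_q$ be the field of order $q$ and $\mathrm{PG}(3,q)$ the projective space with points $\mathbf P(x_0,x_1,x_2,x_3)$. For $t\in\mathbb F_q$ put $P(t)=\mathbf P(t^3,t^2,t,1)$, and $P(\infty)=\mathbf P(1,0,0,0)$; the twisted cubic is $\mathcal C=\{P(t):t\in\mathbb F_q\cup\{\infty\}\}$ and $G_q$ is the group of projectivities fixing $\mathcal C$. The osculating plane at $P(t)$ is $x_0-3tx_1+3t^2x_2-t^3x_3=0$ ($t\in\mathbb F_q$) and $x_3=0$ at $P(\infty)$; these are the $\Gamma$-planes. The tangent at $P(t)$, $t\in\mathbb F_q$, is the line through $P(t)$ and $\mathbf P(3t^2,2t,1,0)$; at $P(\infty)$ it is the line through $\mathbf P(1,0,0,0),\mathbf P(0,1,0,0)$. A real chord joins two distinct points of $\mathcal C$; an imaginary chord joins $P(\tau),P(\tau^q)$, $\tau\in\mathbb F_{q^2}\setminus\mathbb F_q$; chords are real chords, tangents and imaginary chords. An axis is the intersection of two distinct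 osculating planes at points of $\mathcal C$, or of the osculating planes at conjugate points $P(\tau),P(\tau^q)$. An $E_{n\Gamma}$-line is a line with no point of $\mathcal C$, not contained in a $\Gamma$-plane, which is neither a chord nor an axis. Plane types: a $d_{\mathcal C}$-plane ($d\in\{0,2,3\}$) contains exactly $d$ points of $\mathcal C$; a $\overline{1_{\mathcal C}}$-plane is a non-$\Gamma$-plane containing exactly one point of $\mathcal C$. Point types for $q\not\equiv 0\pmod 3$: $T$-points are points off $\mathcal C$ on a tangent; $\mu_\Gamma$-points ($\mu\in\{0,1,3\}$) are points off $\mathcal C$ lying in exactly $\mu$ distinct $\Gamma$-planes. For a $G_q$-orbit $\mathcal O$ of lines, $\Pi_\pi$ = number of $\pi$-planes through a line of $\mathcal O$, $P_{\mathfrak p}$ = number of $\mathfrak p$-points on a line of $\mathcal O$ (independent of the line). *)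

theory Defs
  imports Main "HOL-Library.Cardinality"
begin

type_synonym 'a v4 = "'a \<times> 'a \<times> 'a \<times> 'a"

definition vzero :: "'a::field v4" where
  "vzero = (0, 0, 0, 0)"

definition vsc :: "'a::field \<Rightarrow> 'a v4 \<Rightarrow> 'a v4" where
  "vsc c v = (case v of (x0, x1, x2, x3) \<Rightarrow> (c * x0, c * x1, c * x2, c * x3))"

definition vadd :: "'a::field v4 \<Rightarrow> 'a v4 \<Rightarrow> 'a v4" where
  "vadd v w = (case v of (x0, x1, x2, x3) \<Rightarrow> case w of (y0, y1, y2, y3) \<Rightarrow>
      (x0 + y0, x1 + y1, x2 + y2, x3 + y3))"

definition vdot :: "'a::field v4 \<Rightarrow> 'a v4 \<Rightarrow> 'a" where
  "vdot f v = (case f of (a0, a1, a2, a3) \<Rightarrow> case v of (x0, x1, x2, x3) \<Rightarrow>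
      a0 * x0 + a1 * x1 + a2 * x2 + a3 * x3)"

definition vmap :: "('a \<Rightarrow> 'b) \<Rightarrow> 'a v4 \<Rightarrow> 'b v4" where
  "vmap h v = (case v of (x0, x1, x2, x3) \<Rightarrow> (h x0, h x1, h x2, h x3))"

text \<open>Points, lines, planes of PG(3,q) are the 1-, 2-, 3-dimensional subspaces of F^4
  (as sets of vectors); incidence is inclusion.\<close>

definition pg_point :: "'a::field v4 \<Rightarrow> 'a v4 set" where
  "pg_point v = {vsc c v | c. True}"

definition is_point :: "'a::field v4 set \<Rightarrow> bool" where
  "is_point S \<longleftrightarrow> (\<exists>v. v \<noteq> vzero \<and> S = pg_point v)"

definition indep2 :: "'a::field v4 \<Rightarrow> 'a v4 \<Rightarrow> bool" where
  "indep2 u w \<longleftrightarrow> (\<forall>a b. vadd (vsc a u) (vsc b w) = vzero \<longrightarrow> a = 0 \<and> b = 0)"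

definition pg_line :: "'a::field v4 \<Rightarrow> 'a v4 \<Rightarrow> 'a v4 set" where
  "pg_line u w = {vadd (vsc a u) (vsc b w) | a b. True}"

definition is_line :: "'a::field v4 set \<Rightarrow> bool" where
  "is_line L \<longleftrightarrow> (\<exists>u w. indep2 u w \<and> L = pg_line u w)"

definition pg_plane :: "'a::field v4 \<Rightarrow> 'a v4 set" where
  "pg_plane f = {x. vdot f x = 0}"

definition is_plane :: "'a::field v4 set \<Rightarrow> bool" where
  "is_plane S \<longleftrightarrow> (\<exists>f. f \<noteq> vzero \<and> S = pg_plane f)"

definition cvec :: "'a::field \<Rightarrow> 'a v4" where
  "cvec t = (t ^ 3, t ^ 2, t, 1)"

definition C_pt :: "'a::field \<Rightarrow> 'a v4 set" where
  "C_pt t = pg_point (cvec t)"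

definition C_inf :: "'a::field v4 set" where
  "C_inf = pg_point (1, 0, 0, 0)"

definition twisted_cubic :: "'a::field v4 set set" where
  "twisted_cubic = range C_pt \<union> {C_inf}"

definition osc_vec :: "'a::field \<Rightarrow> 'a v4" where
  "osc_vec t = (1, - 3 * t, 3 * t ^ 2, - (t ^ 3))"

definition Gamma_planes :: "'a::field v4 set set" where
  "Gamma_planes = range (\<lambda>t. pg_plane (osc_vec t)) \<union> {pg_plane (0, 0, 0, 1)}"

definition tangent :: "'a::field \<Rightarrow> 'a v4 set" where
  "tangent t = pg_line (cvec t) (3 * t ^ 2, 2 * t, 1, 0)"

definition tangent_inf :: "'a::field v4 set" where
  "tangent_inf = pg_line (1, 0, 0, 0) (0, 1, 0, 0)"

definition tangents :: "'a::field v4 set set" where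
  "tangents = range tangent \<union> {tangent_inf}"

text \<open>The quadratic extension F_{q^2} is given by a field embedding emb of F_q into a
  field 'b with q^2 elements; F_q is identified with range emb, and tau^q is the
  conjugate of tau.\<close>

definition field_embedding :: "('a::field \<Rightarrow> 'b::field) \<Rightarrow> bool" where
  "field_embedding emb \<longleftrightarrow> inj emb \<and> emb 1 = 1 \<and>
     (\<forall>x y. emb (x + y) = emb x + emb y) \<and> (\<forall>x y. emb (x * y) = emb x * emb y)"

definition real_chord :: "'a::field v4 set \<Rightarrow> bool" where
  "real_chord L \<longleftrightarrow> is_line L \<and>
     (\<exists>P Q. P \<in> twisted_cubic \<and> Q \<in> twisted_cubic \<and> P \<noteq> Q \<and> P \<subseteq> L \<and> Q \<subseteq> L)"

text \<open>Imaginary chord: the F_q-line whose extension to F_{q^2} contains P(tau), P(tau^q).\<close>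
definition imag_chord :: "('a::{finite,field} \<Rightarrow> 'b::field) \<Rightarrow> 'a v4 set \<Rightarrow> bool" where
  "imag_chord emb L \<longleftrightarrow> is_line L \<and>
     (\<exists>\<tau>. \<tau> \<notin> range emb \<and>
        (\<exists>u w. indep2 u w \<and> L = pg_line u w \<and>
           (\<exists>a b. cvec \<tau> = vadd (vsc a (vmap emb u)) (vsc b (vmap emb w))) \<and>
           (\<exists>a b. cvec (\<tau> ^ CARD('a)) = vadd (vsc a (vmap emb u)) (vsc b (vmap emb w)))))"

definition chord :: "('a::{finite,field} \<Rightarrow> 'b::field) \<Rightarrow> 'a v4 set \<Rightarrow> bool" where
  "chord emb L \<longleftrightarrow> real_chord L \<or> L \<in> tangents \<or> imag_chord emb L"

definition real_axis :: "'a::field v4 set \<Rightarrow> bool" where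
  "real_axis L \<longleftrightarrow> (\<exists>\<Pi>1 \<Pi>2. \<Pi>1 \<in> Gamma_planes \<and> \<Pi>2 \<in> Gamma_planes \<and> \<Pi>1 \<noteq> \<Pi>2 \<and> L = \<Pi>1 \<inter> \<Pi>2)"

text \<open>Imaginary axis: the F_q-line whose extension is the intersection of the osculating
  planes (over F_{q^2}) at P(tau), P(tau^q).\<close>
definition imag_axis :: "('a::{finite,field} \<Rightarrow> 'b::field) \<Rightarrow> 'a v4 set \<Rightarrow> bool" where
  "imag_axis emb L \<longleftrightarrow> is_line L \<and>
     (\<exists>\<tau>. \<tau> \<notin> range emb \<and>
        (\<forall>x\<in>L. vdot (osc_vec \<tau>) (vmap emb x) = 0 \<and>
               vdot (osc_vec (\<tau> ^ CARD('a))) (vmap emb x) = 0))"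

definition axis :: "('a::{finite,field} \<Rightarrow> 'b::field) \<Rightarrow> 'a v4 set \<Rightarrow> bool" where
  "axis emb L \<longleftrightarrow> real_axis L \<or> imag_axis emb L"

definition EnGamma_line :: "('a::{finite,field} \<Rightarrow> 'b::field) \<Rightarrow> 'a v4 set \<Rightarrow> bool" where
  "EnGamma_line emb L \<longleftrightarrow> is_line L \<and>
     (\<forall>P\<in>twisted_cubic. \<not> P \<subseteq> L) \<and>
     (\<forall>\<Pi>\<in>Gamma_planes. \<not> L \<subseteq> \<Pi>) \<and>
     \<not> chord emb L \<and> \<not> axis emb L"

definition nC :: "'a::field v4 set \<Rightarrow> nat" where
  "nC S = card {P \<in> twisted_cubic. P \<subseteq> S}"

definition Pi_dC :: "nat \<Rightarrow> 'a::field v4 set \<Rightarrow> nat" where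
  "Pi_dC d L = card {\<Pi>. is_plane \<Pi> \<and> L \<subseteq> \<Pi> \<and> nC \<Pi> = d}"

definition Pi_1barC :: "'a::field v4 set \<Rightarrow> nat" where
  "Pi_1barC L = card {\<Pi>. is_plane \<Pi> \<and> L \<subseteq> \<Pi> \<and> \<Pi> \<notin> Gamma_planes \<and> nC \<Pi> = 1}"

definition T_point :: "'a::field v4 set \<Rightarrow> bool" where
  "T_point P \<longleftrightarrow> is_point P \<and> P \<notin> twisted_cubic \<and> (\<exists>T\<in>tangents. P \<subseteq> T)"

definition mu_Gamma_point :: "nat \<Rightarrow> 'a::field v4 set \<Rightarrow> bool" where
  "mu_Gamma_point \<mu> P \<longleftrightarrow> is_point P \<and> P \<notin> twisted_cubic \<and>
     card {\<Pi> \<in> Gamma_planes. P \<subseteq> \<Pi>} = \<mu>"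

definition P_T :: "'a::field v4 set \<Rightarrow> nat" where
  "P_T L = card {P. T_point P \<and> P \<subseteq> L}"

definition P_muGamma :: "nat \<Rightarrow> 'a::field v4 set \<Rightarrow> nat" where
  "P_muGamma \<mu> L = card {P. mu_Gamma_point \<mu> P \<and> P \<subseteq> L}"

definition lin4 :: "('a::field v4 \<Rightarrow> 'a v4) \<Rightarrow> bool" where
  "lin4 g \<longleftrightarrow> (\<forall>x y. g (vadd x y) = vadd (g x) (g y)) \<and> (\<forall>c x. g (vsc c x) = vsc c (g x))"

definition Gq :: "('a::field v4 \<Rightarrow> 'a v4) set" where
  "Gq = {g. lin4 g \<and> bij g \<and> (\<lambda>P. g ` P) ` twisted_cubic = twisted_cubic}"

definition line_orbit :: "'a::field v4 set \<Rightarrow> 'a v4 set set" where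
  "line_orbit L = {g ` L | g. g \<in> Gq}"

definition is_Gq_line_orbit :: "'a::field v4 set set \<Rightarrow> bool" where
  "is_Gq_line_orbit Orb \<longleftrightarrow> (\<exists>L. is_line L \<and> Orb = line_orbit L)"

end

theory Submission
  imports Defs "HOL-Computational_Algebra.Polynomial" "HOL-Number_Theory.Residues"
begin


lemma v4_cases: obtains a b c d where "v = (a,b,c,d)"
  by (cases v) auto

lemma vdot_vsc[simp]: "vdot f (vsc c v) = c * vdot f v"
  by (cases f; cases v) (auto simp: vdot_def vsc_def algebra_simps)

lemma vdot_vadd[simp]: "vdot f (vadd v w) = vdot f v + vdot f w"
  by (cases f; cases v; cases w) (auto simp: vdot_def vadd_def algebra_simps)

lemma vsc_vsc[simp]: "vsc a (vsc b v) = vsc (a*b) v"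
  by (cases v) (auto simp: vsc_def)

lemma vsc_1[simp]: "vsc 1 v = v"
  by (cases v) (auto simp: vsc_def)

lemma vsc_0[simp]: "vsc 0 v = vzero"
  by (cases v) (auto simp: vsc_def vzero_def)

lemma vsc_zero_iff: "vsc c (v::'a::field v4) = vzero \<longleftrightarrow> c = 0 \<or> v = vzero"
  by (cases v) (auto simp: vsc_def vzero_def)

lemma vsc_vadd: "vsc c (vadd v w) = vadd (vsc c v) (vsc c w)"
  by (cases v; cases w) (auto simp: vsc_def vadd_def algebra_simps)

lemma pt_mem: "v \<in> pg_point v"
  unfolding pg_point_def by (rule CollectI, rule exI[of _ 1]) simp

lemma pg_point_sub_iff:
  assumes "\<And>c x. x \<in> S \<Longrightarrow> vsc c x \<in> S"
  shows "pg_point v \<subseteq> S \<longleftrightarrow> v \<in> S"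
  using assms pt_mem unfolding pg_point_def by blast

lemma pg_point_scale: "(c::'a::field) \<noteq> 0 \<Longrightarrow> pg_point (vsc c v) = pg_point v"
proof (intro equalityI subsetI)
  fix x assume "x \<in> pg_point (vsc c v)"
  then obtain d where "x = vsc d (vsc c v)" unfolding pg_point_def by blast
  then have "x = vsc (d*c) v" by simp
  then show "x \<in> pg_point v" unfolding pg_point_def by blast
next
  assume c: "c \<noteq> 0"
  fix x assume "x \<in> pg_point v"
  then obtain d where "x = vsc d v" unfolding pg_point_def by blast
  then have "x = vsc (d/c) (vsc c v)" using c by simp
  then show "x \<in> pg_point (vsc c v)" unfolding pg_point_def by blast
qed

lemma pg_point_eq: "pg_point v = pg_point v' \<Longrightarrow> \<exists>c. v' = vsc c v"
  using pt_mem[of v'] unfolding pg_point_def by auto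

lemma plane_closed: "x \<in> pg_plane f \<Longrightarrow> vsc c x \<in> pg_plane f"
  by (simp add: pg_plane_def)

lemma line_closed: "x \<in> pg_line u w \<Longrightarrow> vsc c x \<in> pg_line u w"
  unfolding pg_line_def by (auto simp: vsc_vadd) blast

lemma pt_sub_plane: "pg_point v \<subseteq> pg_plane f \<longleftrightarrow> vdot f v = 0"
  using pg_point_sub_iff[OF plane_closed] by (simp add: pg_plane_def)

lemma pt_sub_line: "pg_point v \<subseteq> pg_line u w \<longleftrightarrow> v \<in> pg_line u w"
  using pg_point_sub_iff[OF line_closed] .

lemma prop2:
  fixes s t s' t' :: "'a::field"
  assumes "(s,t) \<noteq> (0,0)" "s * t' = s' * t"
  shows "\<exists>c. s' = c * s \<and> t' = c * t"
proof (cases "s = 0")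
  case True
  then have "t \<noteq> 0" using assms by auto
  then show ?thesis using assms True by (intro exI[of _ "t' / t"]) (auto simp: field_simps)
next
  case False
  then show ?thesis using assms by (intro exI[of _ "s' / s"]) (auto simp: field_simps)
qed

lemma P1_card:
  fixes \<Phi> :: "'a::{finite,field} \<Rightarrow> 'a \<Rightarrow> 'c"
  assumes sc: "\<And>a b c. c \<noteq> 0 \<Longrightarrow> \<Phi> (c*a) (c*b) = \<Phi> a b"
    and inj: "\<And>a b a' b'. (a,b) \<noteq> (0,0) \<Longrightarrow> (a',b') \<noteq> (0,0) \<Longrightarrow> \<Phi> a b = \<Phi> a' b'
              \<Longrightarrow> \<exists>c. a' = c*a \<and> b' = c*b"
  shows "card {\<Phi> a b | a b. (a,b) \<noteq> (0,0)} = CARD('a) + 1"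
proof -
  have eq: "{\<Phi> a b | a b. (a,b) \<noteq> (0,0)} = insert (\<Phi> 0 1) (range (\<Phi> 1))"
  proof (intro equalityI subsetI)
    fix P assume "P \<in> {\<Phi> a b | a b. (a,b) \<noteq> (0,0)}"
    then obtain a b where P: "P = \<Phi> a b" "(a,b) \<noteq> (0,0)" by auto
    show "P \<in> insert (\<Phi> 0 1) (range (\<Phi> 1))"
    proof (cases "a = 0")
      case True
      then have "b \<noteq> 0" using P by auto
      then have "\<Phi> (b*0) (b*1) = \<Phi> 0 1" by (rule sc)
      then show ?thesis using P True by simp
    next
      case False
      then have "\<Phi> (a*1) (a*(b/a)) = \<Phi> 1 (b/a)" by (rule sc)
      then show ?thesis using P False by simp
    qed
  next
    fix P assume "P \<in> insert (\<Phi> 0 1) (range (\<Phi> 1))"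
    then show "P \<in> {\<Phi> a b | a b. (a,b) \<noteq> (0,0)}" apply auto by (metis zero_neq_one)+
  qed
  have i: "inj (\<Phi> 1)"
  proof (rule injI)
    fix x y assume "\<Phi> 1 x = \<Phi> 1 y"
    from inj[OF _ _ this] show "x = y" by auto
  qed
  have n: "\<Phi> 0 1 \<notin> range (\<Phi> 1)"
  proof
    assume "\<Phi> 0 1 \<in> range (\<Phi> 1)"
    then obtain x where "\<Phi> 0 1 = \<Phi> 1 x" by auto
    from inj[OF _ _ this] show False by auto
  qed
  show ?thesis unfolding eq using i n by (simp add: card_image)
qed

lemma P1_unique:
  fixes \<Phi> :: "'a::field \<Rightarrow> 'a \<Rightarrow> 'c"
  assumes sc: "\<And>a b c. c \<noteq> 0 \<Longrightarrow> \<Phi> (c*a) (c*b) = \<Phi> a b"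
    and nz: "(\<alpha>,\<beta>) \<noteq> (0,0)"
  shows "{\<Phi> a b | a b. (a,b) \<noteq> (0,0) \<and> \<alpha>*a + \<beta>*b = 0} = {\<Phi> \<beta> (-\<alpha>)}"
proof (intro equalityI subsetI)
  fix P assume "P \<in> {\<Phi> a b | a b. (a,b) \<noteq> (0,0) \<and> \<alpha>*a + \<beta>*b = 0}"
  then obtain a b where P: "P = \<Phi> a b" "(a,b) \<noteq> (0,0)" "\<alpha>*a + \<beta>*b = 0" by auto
  have "\<beta> * b = (-\<alpha>) * a" using P(3) by (metis add.commute add_eq_0_iff2 minus_mult_left)
  from prop2[of \<beta> "-\<alpha>" b a] nz this obtain c where c: "a = c*\<beta>" "b = c*(-\<alpha>)"
    by (auto simp: mult.commute)
  then have "c \<noteq> 0" using P by auto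
  then show "P \<in> {\<Phi> \<beta> (-\<alpha>)}" using sc[of c \<beta> "-\<alpha>"] P c by simp
next
  fix P assume "P \<in> {\<Phi> \<beta> (-\<alpha>)}"
  then have "P = \<Phi> \<beta> (-\<alpha>)" by simp
  moreover have "(\<beta>,-\<alpha>) \<noteq> (0,0) \<and> \<alpha>*\<beta> + \<beta>*(-\<alpha>) = 0" using nz by (auto simp: algebra_simps)
  ultimately show "P \<in> {\<Phi> a b | a b. (a,b) \<noteq> (0,0) \<and> \<alpha>*a + \<beta>*b = 0}" by blast
qed

lemma sum_double_count:
  assumes "finite A" "finite B"
  shows "(\<Sum>x\<in>A. card {y\<in>B. R x y}) = (\<Sum>y\<in>B. card {x\<in>A. R x y})"
proof -
  have "(\<Sum>x\<in>A. card {y\<in>B. R x y}) = (\<Sum>x\<in>A. \<Sum>y\<in>B. if R x y then 1 else 0)"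
    using assms by (simp add: sum.If_cases Int_def)
  also have "\<dots> = (\<Sum>y\<in>B. \<Sum>x\<in>A. if R x y then 1 else 0)" by (rule sum.swap)
  also have "\<dots> = (\<Sum>y\<in>B. card {x\<in>A. R x y})"
    using assms by (simp add: sum.If_cases Int_def)
  finally show ?thesis .
qed

lemma sum_split4:
  fixes m :: "'x \<Rightarrow> nat"
  assumes "finite A" "\<And>x. x \<in> A \<Longrightarrow> m x \<le> 3"
  shows "sum m A = card {x\<in>A. m x = 1} + 2 * card {x\<in>A. m x = 2} + 3 * card {x\<in>A. m x = 3}"
    and "card A = card {x\<in>A. m x = 0} + card {x\<in>A. m x = 1} + card {x\<in>A. m x = 2} + card {x\<in>A. m x = 3}"
proof -
  have "sum m A = (\<Sum>x\<in>A. (if m x = 1 then 1 else 0) + 2 * (if m x = 2 then 1 else 0) + 3 * (if m x = 3 then 1 else 0))"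
    apply (rule sum.cong[OF refl])
    subgoal for x using assms(2)[of x] by auto
    done
  also have "\<dots> = card {x\<in>A. m x = 1} + 2 * card {x\<in>A. m x = 2} + 3 * card {x\<in>A. m x = 3}"
    using assms(1) by (simp add: sum.distrib sum_distrib_left[symmetric] sum.If_cases Int_def)
  finally show "sum m A = card {x\<in>A. m x = 1} + 2 * card {x\<in>A. m x = 2} + 3 * card {x\<in>A. m x = 3}" .
  have "card A = (\<Sum>x\<in>A. (if m x = 0 then 1 else 0) + (if m x = 1 then 1 else 0) + (if m x = 2 then 1 else 0) + (if m x = 3 then 1 else 0))"
    apply (subst card_eq_sum)
    apply (rule sum.cong[OF refl])
    subgoal for x using assms(2)[of x] by auto
    done
  also have "\<dots> = card {x\<in>A. m x = 0} + card {x\<in>A. m x = 1} + card {x\<in>A. m x = 2} + card {x\<in>A. m x = 3}"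
    using assms(1) by (simp add: sum.distrib sum.If_cases Int_def)
  finally show "card A = card {x\<in>A. m x = 0} + card {x\<in>A. m x = 1} + card {x\<in>A. m x = 2} + card {x\<in>A. m x = 3}" .
qed



definition cof :: "'a::field v4 \<Rightarrow> 'a v4 \<Rightarrow> 'a v4 \<Rightarrow> 'a v4" where
  "cof a b c = (case a of (a0,a1,a2,a3) \<Rightarrow> case b of (b0,b1,b2,b3) \<Rightarrow> case c of (c0,c1,c2,c3) \<Rightarrow>
     (- (a1*(b2*c3 - b3*c2) - a2*(b1*c3 - b3*c1) + a3*(b1*c2 - b2*c1)),
      a0*(b2*c3 - b3*c2) - a2*(b0*c3 - b3*c0) + a3*(b0*c2 - b2*c0),
      - (a0*(b1*c3 - b3*c1) - a1*(b0*c3 - b3*c0) + a3*(b0*c1 - b1*c0)),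
      a0*(b1*c2 - b2*c1) - a1*(b0*c2 - b2*c0) + a2*(b0*c1 - b1*c0)))"

definition det4 :: "'a::field v4 \<Rightarrow> 'a v4 \<Rightarrow> 'a v4 \<Rightarrow> 'a v4 \<Rightarrow> 'a" where
  "det4 a b c d = vdot (cof a b c) d"

lemma det4_swap34: "det4 a b c d = - det4 a b d c"
  by (cases a; cases b; cases c; cases d) (simp add: det4_def cof_def vdot_def algebra_simps)

lemma det4_rep1: "det4 a b a d = 0"
  by (cases a; cases b; cases d) (simp add: det4_def cof_def vdot_def algebra_simps)

lemma det4_rep2: "det4 a b b d = 0"
  by (cases a; cases b; cases d) (simp add: det4_def cof_def vdot_def algebra_simps)

lemma det4_rep3: "det4 a b c c = 0"
  by (cases a; cases b; cases c) (simp add: det4_def cof_def vdot_def algebra_simps)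

lemma cramer:
  "vsc (det4 u w y z) x = vadd (vadd (vsc (det4 x w y z) u) (vsc (det4 u x y z) w))
                               (vadd (vsc (det4 u w x z) y) (vsc (det4 u w y x) z))"
  by (cases u; cases w; cases y; cases z; cases x)
     (simp add: det4_def cof_def vdot_def vsc_def vadd_def algebra_simps)

lemma vdot_cof_det: "vdot (cof a b c) d = det4 a b c d"
  by (simp add: det4_def)

lemma vadd_zero_left[simp]: "vadd vzero v = v"
  by (cases v) (simp add: vadd_def vzero_def)

lemma vadd_zero_right[simp]: "vadd v vzero = v"
  by (cases v) (simp add: vadd_def vzero_def)

lemma vdot_zero[simp]: "vdot f vzero = 0"
  by (cases f) (simp add: vdot_def vzero_def)

lemma indep2_eq:
  assumes "indep2 u w" "vadd (vsc a u) (vsc b w) = vadd (vsc a' u) (vsc b' w)"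
  shows "a = a' \<and> b = b'"
proof -
  have "vadd (vsc (a - a') u) (vsc (b - b') w) = vzero"
    using assms(2) by (cases u; cases w) (simp add: vadd_def vsc_def vzero_def algebra_simps)
  then show ?thesis using assms(1) unfolding indep2_def by force
qed

lemma indep2_nz:
  assumes "indep2 u w" "(a,b) \<noteq> (0,0)"
  shows "vadd (vsc a u) (vsc b w) \<noteq> vzero"
  using assms unfolding indep2_def by auto

lemma indep2_ext:
  fixes u w :: "'a::field v4"
  assumes "indep2 u w"
  shows "\<exists>y z. det4 u w y z \<noteq> 0"
proof (rule ccontr)
  assume "\<not> (\<exists>y z. det4 u w y z \<noteq> 0)"
  then have H: "\<And>y z. det4 u w y z = 0" by auto
  obtain u0 u1 u2 u3 where u: "u = (u0,u1,u2,u3)" by (cases u) auto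
  obtain w0 w1 w2 w3 where w: "w = (w0,w1,w2,w3)" by (cases w) auto
  have p: "u0*w1 = u1*w0" "u0*w2 = u2*w0" "u0*w3 = u3*w0" "u1*w2 = u2*w1" "u1*w3 = u3*w1" "u2*w3 = u3*w2"
    using H[of "(0,0,1,0)" "(0,0,0,1)"] H[of "(0,1,0,0)" "(0,0,0,1)"] H[of "(0,1,0,0)" "(0,0,1,0)"]
          H[of "(1,0,0,0)" "(0,0,0,1)"] H[of "(1,0,0,0)" "(0,0,1,0)"] H[of "(1,0,0,0)" "(0,1,0,0)"]
    by (simp_all add: u w det4_def cof_def vdot_def algebra_simps)
  have "\<exists>a b. vadd (vsc a u) (vsc b w) = vzero \<and> (a \<noteq> 0 \<or> b \<noteq> 0)"
  proof -
    consider "u0 \<noteq> 0" | "u1 \<noteq> 0" | "u2 \<noteq> 0" | "u3 \<noteq> 0" | "u = vzero" by (auto simp: u vzero_def)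
    then show ?thesis
    proof cases
      case 1 then show ?thesis using p
        by (intro exI[of _ w0] exI[of _ "-u0"]) (simp add: u w vadd_def vsc_def vzero_def algebra_simps)
    next
      case 2 then show ?thesis using p
        by (intro exI[of _ w1] exI[of _ "-u1"]) (simp add: u w vadd_def vsc_def vzero_def algebra_simps)
    next
      case 3 then show ?thesis using p
        by (intro exI[of _ w2] exI[of _ "-u2"]) (simp add: u w vadd_def vsc_def vzero_def algebra_simps)
    next
      case 4 then show ?thesis using p
        by (intro exI[of _ w3] exI[of _ "-u3"]) (simp add: u w vadd_def vsc_def vzero_def algebra_simps)
    next
      case 5 then show ?thesis
        by (intro exI[of _ 1] exI[of _ 0]) simp
    qed
  qed
  then show False using assms unfolding indep2_def by blast
qed

lemma vsc_vadd2: "vadd (vsc (c*a) u) (vsc (c*b) w) = vsc c (vadd (vsc a u) (vsc b w))"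
  by (simp add: vsc_vadd)

lemma vdot_vsc_left[simp]: "vdot (vsc c f) x = c * vdot f x"
  by (cases f; cases x) (simp add: vdot_def vsc_def algebra_simps)

lemma vdot_vadd_left[simp]: "vdot (vadd f g) x = vdot f x + vdot g x"
  by (cases f; cases g; cases x) (simp add: vdot_def vadd_def algebra_simps)

lemma pg_plane_scale: "(c::'a::field) \<noteq> 0 \<Longrightarrow> pg_plane (vsc c f) = pg_plane f"
  unfolding pg_plane_def by (simp add: vdot_vsc_left)

lemma vec_eqI_vdot:
  fixes f :: "'a::field v4"
  assumes "\<And>x. vdot f x = 0"
  shows "f = vzero"
  using assms[of "(1,0,0,0)"] assms[of "(0,1,0,0)"] assms[of "(0,0,1,0)"] assms[of "(0,0,0,1)"]
  by (cases f) (simp add: vdot_def vzero_def)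

lemma line_mem_lin: "vadd (vsc a u) (vsc b w) \<in> pg_line u w"
  unfolding pg_line_def by blast

lemma line_sub_plane: "pg_line u w \<subseteq> pg_plane f \<longleftrightarrow> vdot f u = 0 \<and> vdot f w = 0"
proof
  assume H: "pg_line u w \<subseteq> pg_plane f"
  have "vadd (vsc 1 u) (vsc 0 w) \<in> pg_line u w" "vadd (vsc 0 u) (vsc 1 w) \<in> pg_line u w"
    by (rule line_mem_lin)+
  then have "u \<in> pg_line u w" "w \<in> pg_line u w" by simp_all
  then have "u \<in> pg_plane f" "w \<in> pg_plane f" using H by blast+
  then show "vdot f u = 0 \<and> vdot f w = 0" by (simp add: pg_plane_def)
next
  assume H: "vdot f u = 0 \<and> vdot f w = 0"
  show "pg_line u w \<subseteq> pg_plane f"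
  proof
    fix x assume "x \<in> pg_line u w"
    then obtain a b where "x = vadd (vsc a u) (vsc b w)" unfolding pg_line_def by blast
    then show "x \<in> pg_plane f" using H by (simp add: pg_plane_def)
  qed
qed

context
  fixes u w :: "'a::{finite,field} v4"
  assumes ind: "indep2 u w"
begin

definition "LPts = {pg_point (vadd (vsc a u) (vsc b w)) | a b. (a,b) \<noteq> (0,0)}"

lemma line_pts: "{P. is_point P \<and> P \<subseteq> pg_line u w} = LPts"
proof (intro equalityI subsetI)
  fix P assume "P \<in> {P. is_point P \<and> P \<subseteq> pg_line u w}"
  then obtain v where v: "v \<noteq> vzero" "P = pg_point v" "v \<in> pg_line u w"
    unfolding is_point_def using pt_sub_line by blast
  then obtain a b where "v = vadd (vsc a u) (vsc b w)" unfolding pg_line_def by blast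
  moreover have "(a,b) \<noteq> (0,0)" using v calculation by auto
  ultimately show "P \<in> LPts" unfolding LPts_def using v by blast
next
  fix P assume "P \<in> LPts"
  then obtain a b where ab: "(a,b) \<noteq> (0,0)" and P: "P = pg_point (vadd (vsc a u) (vsc b w))"
    unfolding LPts_def by blast
  have "vadd (vsc a u) (vsc b w) \<noteq> vzero" using indep2_nz[OF ind ab] .
  then have "is_point P" unfolding is_point_def using P by blast
  moreover have "P \<subseteq> pg_line u w" by (simp only: P pt_sub_line line_mem_lin)
  ultimately show "P \<in> {P. is_point P \<and> P \<subseteq> pg_line u w}" by blast
qed

lemma LPhi_scale: "c \<noteq> 0 \<Longrightarrow> pg_point (vadd (vsc (c*a) u) (vsc (c*b) w)) = pg_point (vadd (vsc a u) (vsc b w))"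
  by (simp only: vsc_vadd2) (rule pg_point_scale)

lemma LPhi_inj:
  assumes "pg_point (vadd (vsc a u) (vsc b w)) = pg_point (vadd (vsc a' u) (vsc b' w))"
  shows "\<exists>c. a' = c*a \<and> b' = c*b"
proof -
  obtain k where "vadd (vsc a' u) (vsc b' w) = vsc k (vadd (vsc a u) (vsc b w))"
    using pg_point_eq[OF assms] by blast
  then have "vadd (vsc a' u) (vsc b' w) = vadd (vsc (k*a) u) (vsc (k*b) w)" by (simp add: vsc_vadd2)
  from indep2_eq[OF ind this] show ?thesis by blast
qed

lemma card_LPts: "card LPts = CARD('a) + 1"
  unfolding LPts_def
  apply (rule P1_card[where \<Phi>="\<lambda>a b. pg_point (vadd (vsc a u) (vsc b w))"])
  subgoal by (erule LPhi_scale)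
  subgoal by (erule LPhi_inj)
  done

lemma LPts_plane:
  assumes "\<not> pg_line u w \<subseteq> pg_plane f"
  shows "card {P \<in> LPts. P \<subseteq> pg_plane f} = 1"
proof -
  have nz: "(vdot f u, vdot f w) \<noteq> (0,0)" using assms line_sub_plane[of u w f] by simp
  have key: "\<And>a b. pg_point (vadd (vsc a u) (vsc b w)) \<subseteq> pg_plane f \<longleftrightarrow> vdot f u * a + vdot f w * b = 0"
    by (simp add: pt_sub_plane mult.commute)
  have "{P \<in> LPts. P \<subseteq> pg_plane f} =
     {pg_point (vadd (vsc a u) (vsc b w)) | a b. (a,b) \<noteq> (0,0) \<and> vdot f u * a + vdot f w * b = 0}"
    unfolding LPts_def using key by blast
  also have "\<dots> = {pg_point (vadd (vsc (vdot f w) u) (vsc (- vdot f u) w))}"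
    by (rule P1_unique[where \<Phi>="\<lambda>a b. pg_point (vadd (vsc a u) (vsc b w))", OF LPhi_scale nz])
  finally show ?thesis by simp
qed

end


lemma vdot_zero_left[simp]: "vdot vzero x = 0"
  by (cases x) (simp add: vdot_def vzero_def)

lemma det4_lin4: "det4 a b c (vadd (vsc p x) (vsc r y)) = p * det4 a b c x + r * det4 a b c y"
  by (simp add: det4_def)

lemma det4_lin3: "det4 a b (vadd (vsc p x) (vsc r y)) d = p * det4 a b x d + r * det4 a b y d"
  by (subst (1 2 3) det4_swap34) (simp add: det4_lin4 algebra_simps)

context
  fixes u w y z :: "'a::{finite,field} v4"
  assumes ind: "indep2 u w" and D: "det4 u w y z \<noteq> 0"
begin

definition "nrm s t = vadd (vsc (-s) (cof u w z)) (vsc t (cof u w y))"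

lemma vdot_nrm: "vdot (nrm s t) x = s * det4 u w x z + t * det4 u w y x"
  unfolding nrm_def by (simp add: vdot_cof_det det4_swap34[of u w z x])

definition "PTs = {pg_plane (nrm s t) | s t. (s,t) \<noteq> (0,0)}"

lemma nrm_nz: assumes "(s,t) \<noteq> (0,0)" shows "nrm s t \<noteq> vzero"
proof
  assume "nrm s t = vzero"
  then have "vdot (nrm s t) y = 0" "vdot (nrm s t) z = 0" by simp_all
  then have "s * det4 u w y z = 0" "t * det4 u w y z = 0"
    by (simp_all add: vdot_nrm det4_rep3 det4_swap34[of u w z y])
  then show False using D assms by simp
qed

lemma planes_through: "{E. is_plane E \<and> pg_line u w \<subseteq> E} = PTs"
proof (intro equalityI subsetI)
  fix P assume "P \<in> {E. is_plane E \<and> pg_line u w \<subseteq> E}"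
  then obtain f where f: "f \<noteq> vzero" "P = pg_plane f" "pg_line u w \<subseteq> pg_plane f"
    unfolding is_plane_def by blast
  then have fu: "vdot f u = 0" "vdot f w = 0" using line_sub_plane by blast+
  have key: "det4 u w y z * vdot f x = vdot (nrm (vdot f y) (vdot f z)) x" for x
  proof -
    have "vdot f (vsc (det4 u w y z) x) = vdot f (vadd (vadd (vsc (det4 x w y z) u) (vsc (det4 u x y z) w))
                               (vadd (vsc (det4 u w x z) y) (vsc (det4 u w y x) z)))"
      by (simp only: cramer[symmetric])
    then show ?thesis using fu by (simp add: vdot_nrm algebra_simps)
  qed
  have nz: "(vdot f y, vdot f z) \<noteq> (0,0)"
  proof
    assume "(vdot f y, vdot f z) = (0,0)"
    then have "\<And>x. det4 u w y z * vdot f x = 0" using key by (simp add: vdot_nrm)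
    then have "\<And>x. vdot f x = 0" using D by simp
    then show False using vec_eqI_vdot f(1) by blast
  qed
  have "pg_plane f = pg_plane (nrm (vdot f y) (vdot f z))"
    unfolding pg_plane_def using key[symmetric] D by simp
  then show "P \<in> PTs" unfolding PTs_def using f(2) nz by blast
next
  fix P assume "P \<in> PTs"
  then obtain s t where st: "(s,t) \<noteq> (0,0)" "P = pg_plane (nrm s t)" unfolding PTs_def by blast
  have "is_plane P" unfolding is_plane_def using st nrm_nz by blast
  moreover have "pg_line u w \<subseteq> P" unfolding st(2) line_sub_plane
    by (simp add: vdot_nrm det4_rep1 det4_rep2 det4_swap34[of u w y u] det4_swap34[of u w y w])
  ultimately show "P \<in> {E. is_plane E \<and> pg_line u w \<subseteq> E}" by blast
qed

lemma PPhi_scale: assumes "c \<noteq> 0" shows "pg_plane (nrm (c*s) (c*t)) = pg_plane (nrm s t)"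
proof -
  have "\<And>x. vdot (nrm (c*s) (c*t)) x = c * vdot (nrm s t) x" by (simp add: vdot_nrm algebra_simps)
  then show ?thesis unfolding pg_plane_def using assms by simp
qed

lemma PPhi_inj:
  assumes "pg_plane (nrm s t) = pg_plane (nrm s' t')" "(s,t) \<noteq> (0,0)"
  shows "\<exists>c. s' = c*s \<and> t' = c*t"
proof -
  define x0 where "x0 = vadd (vsc t y) (vsc (-s) z)"
  have e: "vdot (nrm a b) x0 = (a*t - b*s) * det4 u w y z" for a b
    unfolding x0_def vdot_nrm det4_lin3 det4_lin4
    by (simp add: det4_rep3 det4_swap34[of u w z y] algebra_simps)
  have "x0 \<in> pg_plane (nrm s t)" by (simp add: pg_plane_def e)
  then have "x0 \<in> pg_plane (nrm s' t')" using assms(1) by simp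
  then have "(s'*t - t'*s) * det4 u w y z = 0" by (simp add: pg_plane_def e)
  then have "s * t' = s' * t" using D by (simp add: algebra_simps)
  from prop2[OF assms(2) this] show ?thesis .
qed

lemma card_PTs: "card PTs = CARD('a) + 1"
  unfolding PTs_def
  apply (rule P1_card[where \<Phi>="\<lambda>s t. pg_plane (nrm s t)"])
  subgoal by (erule PPhi_scale)
  subgoal by (erule PPhi_inj) simp
  done

lemma PTs_pt:
  assumes "v \<notin> pg_line u w"
  shows "card {E \<in> PTs. pg_point v \<subseteq> E} = 1"
proof -
  define \<alpha> where "\<alpha> = det4 u w v z"
  define \<beta> where "\<beta> = det4 u w y v"
  have nz: "(\<alpha>, \<beta>) \<noteq> (0,0)"
  proof
    assume "(\<alpha>, \<beta>) = (0,0)"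
    then have "vsc (det4 u w y z) v = vadd (vsc (det4 v w y z) u) (vsc (det4 u v y z) w)"
      using cramer[of u w y z v] by (simp add: \<alpha>_def \<beta>_def)
    then have "vsc (inverse (det4 u w y z)) (vsc (det4 u w y z) v) \<in> pg_line u w"
      by (metis line_closed line_mem_lin)
    then show False using assms D by simp
  qed
  have key: "\<And>s t. pg_point v \<subseteq> pg_plane (nrm s t) \<longleftrightarrow> \<alpha> * s + \<beta> * t = 0"
    by (simp add: pt_sub_plane vdot_nrm \<alpha>_def \<beta>_def mult.commute)
  have "{E \<in> PTs. pg_point v \<subseteq> E} = {pg_plane (nrm s t) | s t. (s,t) \<noteq> (0,0) \<and> \<alpha> * s + \<beta> * t = 0}"
    unfolding PTs_def using key by blast
  also have "\<dots> = {pg_plane (nrm \<beta> (-\<alpha>))}"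
    by (rule P1_unique[where \<Phi>="\<lambda>s t. pg_plane (nrm s t)", OF PPhi_scale nz])
  finally show ?thesis by simp
qed

end



lemma C_pt_inj: "inj (C_pt :: 'a::field \<Rightarrow> _)"
proof (rule injI)
  fix s t :: 'a assume "C_pt s = C_pt t"
  then obtain c where "cvec t = vsc c (cvec s)" unfolding C_pt_def using pg_point_eq by blast
  then show "s = t" by (simp add: cvec_def vsc_def)
qed

lemma C_inf_notin: "C_inf \<notin> range (C_pt :: 'a::field \<Rightarrow> _)"
proof
  assume "C_inf \<in> range (C_pt :: 'a \<Rightarrow> _)"
  then obtain t :: 'a where "C_pt t = C_inf" by auto
  then obtain c where "(1,0,0,0) = vsc c (cvec t)" unfolding C_pt_def C_inf_def using pg_point_eq by metis
  then show False by (auto simp: cvec_def vsc_def)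
qed

lemma card_tc: "card (twisted_cubic :: 'a::{finite,field} v4 set set) = CARD('a) + 1"
proof -
  have "card (range C_pt \<union> {C_inf :: 'a v4 set}) = card (range (C_pt :: 'a \<Rightarrow> _)) + card {C_inf :: 'a v4 set}"
    by (rule card_Un_disjoint) (use C_inf_notin in auto)
  then show ?thesis unfolding twisted_cubic_def using card_image[OF C_pt_inj] by simp
qed

lemma vdot_cvec: "vdot (f0,f1,f2,f3) (cvec t) = poly [:f3,f2,f1,f0:] t"
  by (simp add: vdot_def cvec_def algebra_simps power2_eq_square power3_eq_cube)

lemma deg3: "degree [:a,b,c,d:] \<le> 3"
  by (simp add: degree_pCons_eq_if)

lemma deg2: "degree [:a,b,c:] \<le> 2"
  by (simp add: degree_pCons_eq_if)

lemma card_roots_le: "p \<noteq> 0 \<Longrightarrow> degree p \<le> k \<Longrightarrow> card {t::'a::field. poly p t = 0} \<le> k"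
  using card_poly_roots_bound[of p] by simp

lemma nC_le3:
  fixes f :: "'a::{finite,field} v4"
  assumes "f \<noteq> vzero"
  shows "nC (pg_plane f) \<le> 3"
proof -
  obtain f0 f1 f2 f3 where f: "f = (f0,f1,f2,f3)" by (cases f) auto
  have eq: "{P \<in> twisted_cubic. P \<subseteq> pg_plane f} =
     C_pt ` {t. poly [:f3,f2,f1,f0:] t = 0} \<union> (if f0 = 0 then {C_inf} else {})"
  proof -
    have k1: "\<And>t. C_pt t \<subseteq> pg_plane f \<longleftrightarrow> poly [:f3,f2,f1,f0:] t = 0"
      unfolding C_pt_def pt_sub_plane f vdot_cvec ..
    have k2: "C_inf \<subseteq> pg_plane f \<longleftrightarrow> f0 = 0"
      unfolding C_inf_def pt_sub_plane f by (simp add: vdot_def)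
    have "P \<in> {P \<in> twisted_cubic. P \<subseteq> pg_plane f} \<longleftrightarrow> (\<exists>t. P = C_pt t \<and> poly [:f3,f2,f1,f0:] t = 0) \<or> (P = C_inf \<and> f0 = 0)" for P
      unfolding twisted_cubic_def k1[symmetric] k2[symmetric] by blast
    then show ?thesis by (auto split: if_splits)
  qed
  have "nC (pg_plane f) \<le> card (C_pt ` {t. poly [:f3,f2,f1,f0:] t = 0}) + card (if f0 = 0 then {C_inf} else ({}::'a v4 set set))"
    unfolding nC_def eq by (rule card_Un_le)
  also have "\<dots> \<le> card {t. poly [:f3,f2,f1,f0:] t = 0} + (if f0 = 0 then 1 else 0)"
    by (intro add_mono card_image_le) auto
  also have "\<dots> \<le> 3"
  proof (cases "f0 = 0")
    case True
    then have "[:f3,f2,f1:] \<noteq> 0" using assms f by (auto simp: vzero_def)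
    then have "card {t. poly [:f3,f2,f1:] t = 0} \<le> 2" using deg2 card_roots_le by blast
    then show ?thesis using True by simp
  next
    case False
    then have "[:f3,f2,f1,f0:] \<noteq> 0" by simp
    then have "card {t. poly [:f3,f2,f1,f0:] t = 0} \<le> 3" using deg3 card_roots_le by blast
    then show ?thesis using False by simp
  qed
  finally show ?thesis .
qed

definition Gpl :: "'a::field \<Rightarrow> 'a v4 set" where "Gpl t = pg_plane (osc_vec t)"
definition Ginf :: "'a::field v4 set" where "Ginf = pg_plane (0,0,0,1)"

lemma osc_cvec: "vdot (osc_vec t) (cvec s) = (s - t)^3"
  by (simp add: vdot_def osc_vec_def cvec_def algebra_simps power2_eq_square power3_eq_cube)

lemma Gpl_inj: "inj (Gpl :: 'a::field \<Rightarrow> _)"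
proof (rule injI)
  fix s t :: 'a assume "Gpl s = Gpl t"
  moreover have "cvec s \<in> Gpl s" by (simp add: Gpl_def pg_plane_def osc_cvec)
  ultimately have "cvec s \<in> Gpl t" by simp
  then show "s = t" by (simp add: Gpl_def pg_plane_def osc_cvec)
qed

lemma Ginf_notin: "Ginf \<notin> range (Gpl :: 'a::field \<Rightarrow> _)"
proof
  assume "Ginf \<in> range (Gpl :: 'a \<Rightarrow> _)"
  then obtain t :: 'a where "Gpl t = Ginf" by auto
  moreover have "cvec t \<in> Gpl t" by (simp add: Gpl_def pg_plane_def osc_cvec)
  ultimately have "cvec t \<in> Ginf" by simp
  then show False by (simp add: Ginf_def pg_plane_def cvec_def vdot_def)
qed

lemma Gamma_eq: "Gamma_planes = range Gpl \<union> {Ginf}"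
  unfolding Gamma_planes_def Gpl_def Ginf_def by simp

lemma card_Gamma: "card (Gamma_planes :: 'a::{finite,field} v4 set set) = CARD('a) + 1"
proof -
  have "card (range Gpl \<union> {Ginf :: 'a v4 set}) = card (range (Gpl :: 'a \<Rightarrow> _)) + card {Ginf :: 'a v4 set}"
    by (rule card_Un_disjoint) (use Ginf_notin in auto)
  then show ?thesis unfolding Gamma_eq using card_image[OF Gpl_inj] by simp
qed



lemma osc_expand: "vdot (osc_vec t) (x0,x1,x2,x3) = x0 - 3*t*x1 + 3*t^2*x2 - t^3*x3"
  by (simp add: vdot_def osc_vec_def algebra_simps)

lemma mu_card:
  fixes x0 x1 x2 x3 :: "'a::{finite,field}"
  shows "card {E \<in> Gamma_planes. pg_point (x0,x1,x2,x3) \<subseteq> E} =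
         card {t. x0 - 3*t*x1 + 3*t^2*x2 - t^3*x3 = 0} + (if x3 = 0 then 1 else 0)"
proof -
  have k1: "\<And>t. pg_point (x0,x1,x2,x3) \<subseteq> Gpl t \<longleftrightarrow> x0 - 3*t*x1 + 3*t^2*x2 - t^3*x3 = 0"
    unfolding Gpl_def pt_sub_plane osc_expand ..
  have k2: "pg_point (x0,x1,x2,x3) \<subseteq> Ginf \<longleftrightarrow> x3 = 0"
    unfolding Ginf_def pt_sub_plane by (simp add: vdot_def)
  have "E \<in> {E \<in> Gamma_planes. pg_point (x0,x1,x2,x3) \<subseteq> E} \<longleftrightarrow>
     (\<exists>t. E = Gpl t \<and> x0 - 3*t*x1 + 3*t^2*x2 - t^3*x3 = 0) \<or> (E = Ginf \<and> x3 = 0)" for E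
    unfolding Gamma_eq k1[symmetric] k2[symmetric] by blast
  then have eq: "{E \<in> Gamma_planes. pg_point (x0,x1,x2,x3) \<subseteq> E} =
     Gpl ` {t. x0 - 3*t*x1 + 3*t^2*x2 - t^3*x3 = 0} \<union> (if x3 = 0 then {Ginf} else {})"
    by (auto split: if_splits)
  have "card (Gpl ` {t. x0 - 3*t*x1 + 3*t^2*x2 - t^3*x3 = 0} \<union> (if x3 = 0 then {Ginf} else {})) =
        card (Gpl ` {t. x0 - 3*t*x1 + 3*t^2*x2 - t^3*x3 = 0}) + card (if x3 = 0 then {Ginf::'a v4 set} else {})"
    by (rule card_Un_disjoint) (use Ginf_notin in auto)
  also have "\<dots> = card {t. x0 - 3*t*x1 + 3*t^2*x2 - t^3*x3 = 0} + (if x3 = 0 then 1 else 0)"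
  proof -
    have ci: "card (Gpl ` S) = card S" for S :: "'a set"
      using card_image[OF inj_on_subset[OF Gpl_inj subset_UNIV]] .
    show ?thesis by (simp only: ci) simp
  qed
  finally show ?thesis unfolding eq .
qed

context
  assumes three: "(3::'a::{finite,field}) \<noteq> 0"
begin

lemma N_le3:
  fixes x0 x1 x2 x3 :: 'a
  assumes "(x0,x1,x2,x3) \<noteq> vzero"
  shows "card {t. x0 - 3*t*x1 + 3*t^2*x2 - t^3*x3 = 0} + (if x3 = 0 then 1 else 0) \<le> 3"
proof -
  have pe: "\<And>t. x0 - 3*t*x1 + 3*t^2*x2 - t^3*x3 = poly [:x0, -3*x1, 3*x2, -x3:] t"
    by (simp add: algebra_simps power2_eq_square power3_eq_cube)
  show ?thesis
  proof (cases "x3 = 0")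
    case True
    then have pe2: "\<And>t. x0 - 3*t*x1 + 3*t^2*x2 - t^3*x3 = poly [:x0, -3*x1, 3*x2:] t"
      by (simp add: algebra_simps power2_eq_square)
    have "[:x0, -3*x1, 3*x2:] \<noteq> 0" using True assms three by (auto simp: vzero_def)
    then have "card {t. poly [:x0, -3*x1, 3*x2:] t = 0} \<le> 2" using deg2 card_roots_le by blast
    then show ?thesis unfolding pe2 using True by simp
  next
    case False
    then have "[:x0, -3*x1, 3*x2, -x3:] \<noteq> 0" by simp
    then have "card {t. poly [:x0, -3*x1, 3*x2, -x3:] t = 0} \<le> 3" using deg3 card_roots_le by blast
    then show ?thesis unfolding pe using False by simp
  qed
qed

lemma tan_lemma:
  fixes x0 x1 x2 x3 a :: 'a
  assumes "x0 - 3*a*x1 + 3*a^2*x2 - a^3*x3 = 0" "-3*x1 + 6*a*x2 - 3*a^2*x3 = 0"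
  shows "(x0,x1,x2,x3) \<in> tangent a"
proof -
  have "3 * (x1 - (2*a*x2 - a^2*x3)) = 0" using assms(2) by (simp add: algebra_simps)
  then have "x1 - (2*a*x2 - a^2*x3) = 0" using three by (metis mult_eq_0_iff)
  then have h1: "x1 = 2*a*x2 - a^2*x3" by (metis right_minus_eq)
  have h0: "x0 = 3*a^2*x2 - 2*a^3*x3" using assms(1) h1 by (simp add: algebra_simps power2_eq_square power3_eq_cube)
  have "(x0,x1,x2,x3) = vadd (vsc x3 (cvec a)) (vsc (x2 - a*x3) (3*a^2, 2*a, 1, 0))"
    using h0 h1 by (simp add: vadd_def vsc_def cvec_def algebra_simps power2_eq_square power3_eq_cube)
  then show ?thesis unfolding tangent_def by (simp add: line_mem_lin)
qed


lemma T_imp_N2: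
  fixes x0 x1 x2 x3 :: 'a
  assumes nz: "(x0,x1,x2,x3) \<noteq> vzero" and nc: "pg_point (x0,x1,x2,x3) \<notin> twisted_cubic"
    and T: "T \<in> tangents" "(x0,x1,x2,x3) \<in> T"
  shows "card {t. x0 - 3*t*x1 + 3*t^2*x2 - t^3*x3 = 0} + (if x3 = 0 then 1 else 0) = 2"
proof -
  consider (fin) a where "T = tangent a" | (inf) "T = tangent_inf" using T(1) unfolding tangents_def by blast
  then show ?thesis
  proof cases
    case fin
    then obtain \<alpha> \<beta> where x: "(x0,x1,x2,x3) = vadd (vsc \<alpha> (cvec a)) (vsc \<beta> (3*a^2, 2*a, 1, 0))"
      using T(2) unfolding tangent_def pg_line_def by blast
    then have c: "x0 = \<alpha>*a^3 + \<beta>*(3*a^2)" "x1 = \<alpha>*a^2 + \<beta>*(2*a)" "x2 = \<alpha>*a + \<beta>" "x3 = \<alpha>"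
      by (simp_all add: vadd_def vsc_def cvec_def)
    have b: "\<beta> \<noteq> 0"
    proof
      assume "\<beta> = 0"
      then have x': "(x0,x1,x2,x3) = vsc \<alpha> (cvec a)" using x by simp
      then have "\<alpha> \<noteq> 0" using nz by auto
      then have "pg_point (x0,x1,x2,x3) = C_pt a" unfolding x' C_pt_def by (rule pg_point_scale)
      then show False using nc unfolding twisted_cubic_def by auto
    qed
    have F: "x0 - 3*t*x1 + 3*t^2*x2 - t^3*x3 = (a-t)^2 * (\<alpha>*(a-t) + 3*\<beta>)" for t
      unfolding c by (simp add: algebra_simps power2_eq_square power3_eq_cube)
    show ?thesis
    proof (cases "\<alpha> = 0")
      case True
      have "x0 - 3*t*x1 + 3*t^2*x2 - t^3*x3 = 0 \<longleftrightarrow> t = a" for t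
        unfolding F using True b three by auto
      then have "{t. x0 - 3*t*x1 + 3*t^2*x2 - t^3*x3 = 0} = {a}" by blast
      then show ?thesis using True c by simp
    next
      case False
      have "x0 - 3*t*x1 + 3*t^2*x2 - t^3*x3 = 0 \<longleftrightarrow> t = a \<or> t = a + 3*\<beta>/\<alpha>" for t
      proof -
        have e1: "(a-t)^2 * (\<alpha>*(a-t) + 3*\<beta>) = 0 \<longleftrightarrow> a - t = 0 \<or> \<alpha>*(a-t) + 3*\<beta> = 0"
          by simp
        have e2: "\<alpha>*(a-t) + 3*\<beta> = 0 \<longleftrightarrow> t = a + 3*\<beta>/\<alpha>"
          using False by (auto simp: field_simps)
        show ?thesis unfolding F e1 e2 by auto
      qed
      then have "{t. x0 - 3*t*x1 + 3*t^2*x2 - t^3*x3 = 0} = {a, a + 3*\<beta>/\<alpha>}" by blast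
      moreover have "a \<noteq> a + 3*\<beta>/\<alpha>" using False b three by simp
      ultimately show ?thesis using False c by simp
    qed
  next
    case inf
    then obtain \<alpha> \<beta> where x: "(x0,x1,x2,x3) = vadd (vsc \<alpha> (1,0,0,0)) (vsc \<beta> (0,1,0,0))"
      using T(2) unfolding tangent_inf_def pg_line_def by blast
    then have c: "x0 = \<alpha>" "x1 = \<beta>" "x2 = 0" "x3 = 0"
      by (simp_all add: vadd_def vsc_def)
    have b: "\<beta> \<noteq> 0"
    proof
      assume "\<beta> = 0"
      then have x': "(x0,x1,x2,x3) = vsc \<alpha> (1,0,0,0)" using c by (simp add: vsc_def)
      then have "\<alpha> \<noteq> 0" using nz by auto
      then have "pg_point (x0,x1,x2,x3) = C_inf" unfolding x' C_inf_def by (rule pg_point_scale)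
      then show False using nc unfolding twisted_cubic_def by auto
    qed
    have "x0 - 3*t*x1 + 3*t^2*x2 - t^3*x3 = 0 \<longleftrightarrow> t = \<alpha> / (3*\<beta>)" for t
      unfolding c using b three by (auto simp: field_simps)
    then have "{t. x0 - 3*t*x1 + 3*t^2*x2 - t^3*x3 = 0} = {\<alpha> / (3*\<beta>)}" by blast
    then show ?thesis using c by simp
  qed
qed

lemma N2_imp_T:
  fixes x0 x1 x2 x3 :: 'a
  assumes N: "card {t. x0 - 3*t*x1 + 3*t^2*x2 - t^3*x3 = 0} + (if x3 = 0 then 1 else 0) = 2"
  shows "\<exists>T\<in>tangents. (x0,x1,x2,x3) \<in> T"
proof (cases "x3 = 0")
  case True
  then have "card {t. x0 - 3*t*x1 + 3*t^2*x2 - t^3*x3 = 0} = 1" using N by simp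
  then obtain a where R: "{t. x0 - 3*t*x1 + 3*t^2*x2 - t^3*x3 = 0} = {a}" by (rule card_1_singletonE)
  then have Fa: "x0 - 3*a*x1 + 3*a^2*x2 - a^3*x3 = 0" by blast
  show ?thesis
  proof (cases "x2 = 0")
    case True
    have "(x0,x1,x2,x3) = vadd (vsc x0 (1,0,0,0)) (vsc x1 (0,1,0,0))"
      using True \<open>x3 = 0\<close> by (simp add: vadd_def vsc_def)
    then have "(x0,x1,x2,x3) \<in> tangent_inf" unfolding tangent_inf_def by (simp add: line_mem_lin)
    then show ?thesis unfolding tangents_def by blast
  next
    case False
    define b where "b = x1/x2 - a"
    have hb: "x2 * (a + b) = x1" using False by (simp add: b_def field_simps)
    have "x0 - 3*b*x1 + 3*b^2*x2 - b^3*x3 = (x0 - 3*a*x1 + 3*a^2*x2 - a^3*x3) + (b - a)*(3*(x2*(a+b)) - 3*x1)"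
      using \<open>x3 = 0\<close> by (simp add: algebra_simps power2_eq_square)
    then have "x0 - 3*b*x1 + 3*b^2*x2 - b^3*x3 = 0" using Fa hb by simp
    then have "b = a" using R by blast
    then have "x1 = 2*a*x2" using hb by (simp add: algebra_simps)
    then have "-3*x1 + 6*a*x2 - 3*a^2*x3 = 0" using \<open>x3 = 0\<close> by (simp add: algebra_simps)
    then have "(x0,x1,x2,x3) \<in> tangent a" using tan_lemma Fa by blast
    then show ?thesis unfolding tangents_def by blast
  qed
next
  case False
  then have "card {t. x0 - 3*t*x1 + 3*t^2*x2 - t^3*x3 = 0} = 2" using N by simp
  then obtain a b where ab: "a \<noteq> b" and R: "{t. x0 - 3*t*x1 + 3*t^2*x2 - t^3*x3 = 0} = {a, b}"
    by (meson card_2_iff)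
  then have Fa: "x0 - 3*a*x1 + 3*a^2*x2 - a^3*x3 = 0" and Fb: "x0 - 3*b*x1 + 3*b^2*x2 - b^3*x3 = 0" by blast+
  define c where "c = 3*x2/x3 - a - b"
  have hc: "x3 * c = 3*x2 - x3*a - x3*b" using False by (simp add: c_def field_simps)
  define \<alpha> where "\<alpha> = x3*(a*b + b*c + c*a) - 3*x1"
  define \<beta> where "\<beta> = x0 - x3*a*b*c"
  have id: "x0 - 3*t*x1 + 3*t^2*x2 - t^3*x3 = \<alpha>*t + \<beta> - x3*(t-a)*(t-b)*(t-c)" for t
  proof -
    have "x0 - 3*t*x1 + 3*t^2*x2 - t^3*x3 - (\<alpha>*t + \<beta> - x3*(t-a)*(t-b)*(t-c)) = t^2 * (3*x2 - x3*a - x3*b - x3*c)"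
      unfolding \<alpha>_def \<beta>_def by (simp add: algebra_simps power2_eq_square power3_eq_cube)
    also have "\<dots> = 0" using hc by simp
    finally show ?thesis by simp
  qed
  have "\<alpha>*a + \<beta> = 0" using id[of a] Fa by simp
  moreover have "\<alpha>*b + \<beta> = 0" using id[of b] Fb by simp
  moreover have "\<alpha> * (a - b) = (\<alpha>*a + \<beta>) - (\<alpha>*b + \<beta>)" by (simp add: algebra_simps)
  ultimately have "\<alpha> * (a - b) = 0" by simp
  then have a0: "\<alpha> = 0" using ab by simp
  then have b0: "\<beta> = 0" using \<open>\<alpha>*a + \<beta> = 0\<close> by simp
  have Fc: "x0 - 3*c*x1 + 3*c^2*x2 - c^3*x3 = 0" using id[of c] a0 b0 by simp
  then have "c = a \<or> c = b" using R by blast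
  have h1: "3*x1 = x3*(a*b + b*c + c*a)" using a0 unfolding \<alpha>_def by simp
  have h2: "3*x2 = x3*(a + b + c)" using hc by (simp add: algebra_simps)
  have "-3*x1 + 6*c*x2 - 3*c^2*x3 = 0"
  proof -
    have "-3*x1 + 6*c*x2 - 3*c^2*x3 = -(3*x1) + 2*c*(3*x2) - 3*c^2*x3"
      by (simp add: algebra_simps)
    also have "\<dots> = - (x3*(a*b + b*c + c*a)) + 2*c*(x3*(a + b + c)) - 3*c^2*x3"
      by (simp only: h1 h2)
    also have "\<dots> = - (x3 * (c - a) * (c - b))"
      by (simp add: algebra_simps power2_eq_square)
    also have "\<dots> = 0" using \<open>c = a \<or> c = b\<close> by auto
    finally show ?thesis .
  qed
  then have "(x0,x1,x2,x3) \<in> tangent c" using tan_lemma Fc by blast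
  then show ?thesis unfolding tangents_def by blast
qed

end



lemma three_ne:
  assumes "CARD('a::{finite,field}) mod 3 \<noteq> 0"
  shows "(3::'a) \<noteq> 0"
proof
  assume h: "(3::'a) = 0"
  have "of_nat 3 = (0::'a)" using h by simp
  then have d: "CHAR('a) dvd 3" by (simp only: of_nat_eq_0_iff_char_dvd)
  have "CHAR('a) \<noteq> 0"
  proof
    assume "CHAR('a) = 0"
    then have "(0::nat) dvd 3" using d by simp
    then show False by simp
  qed
  moreover have "CHAR('a) \<noteq> 1" by simp
  moreover have "CHAR('a) \<noteq> 2" using d by auto
  moreover have "CHAR('a) \<le> 3" using d by (simp add: dvd_imp_le)
  ultimately have "CHAR('a) = 3" by arith
  then have "3 dvd CARD('a)" using CHAR_dvd_CARD[where 'a='a] by simp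
  then show False using assms by simp
qed

lemma tangent_line: "T \<in> tangents \<Longrightarrow> \<exists>u w. T = pg_line u w"
  unfolding tangents_def tangent_def tangent_inf_def by blast

lemma gamma_plane: "E \<in> Gamma_planes \<Longrightarrow> \<exists>g. E = pg_plane g"
  unfolding Gamma_planes_def by blast

lemma point_props:
  fixes x :: "'a::{finite,field} v4"
  assumes three: "(3::'a) \<noteq> 0" and nz: "x \<noteq> vzero" and nc: "pg_point x \<notin> twisted_cubic"
  shows "card {E \<in> Gamma_planes. pg_point x \<subseteq> E} \<le> 3"
    and "T_point (pg_point x) \<longleftrightarrow> card {E \<in> Gamma_planes. pg_point x \<subseteq> E} = 2"
proof -
  obtain x0 x1 x2 x3 where x: "x = (x0,x1,x2,x3)" by (cases x) auto
  show "card {E \<in> Gamma_planes. pg_point x \<subseteq> E} \<le> 3"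
    unfolding x mu_card using N_le3[OF three] nz x by blast
  show "T_point (pg_point x) \<longleftrightarrow> card {E \<in> Gamma_planes. pg_point x \<subseteq> E} = 2"
  proof
    assume "T_point (pg_point x)"
    then obtain T where T: "T \<in> tangents" "pg_point x \<subseteq> T" unfolding T_point_def by blast
    then have "x \<in> T" using pt_mem by blast
    then show "card {E \<in> Gamma_planes. pg_point x \<subseteq> E} = 2"
      unfolding x mu_card using T_imp_N2[OF three] nz nc T(1) x by blast
  next
    assume "card {E \<in> Gamma_planes. pg_point x \<subseteq> E} = 2"
    then obtain T where T: "T \<in> tangents" "x \<in> T"
      unfolding x mu_card using N2_imp_T[OF three] by blast
    obtain p r where "T = pg_line p r" using tangent_line[OF T(1)] by blast
    then have "pg_point x \<subseteq> T" using T(2) pt_sub_line by blast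
    moreover have "is_point (pg_point x)" unfolding is_point_def using nz by blast
    ultimately show "T_point (pg_point x)" unfolding T_point_def using nc T(1) by blast
  qed
qed


theorem proposition3p7:
  fixes emb :: "'a::{finite,field} \<Rightarrow> 'b::{finite,field}"
    and Orb :: "'a v4 set set" and L :: "'a v4 set"
  assumes "field_embedding emb"
    and "CARD('b) = CARD('a) ^ 2"
    and "CARD('a) \<ge> 5"
    and "is_Gq_line_orbit Orb"
    and "\<forall>M\<in>Orb. EnGamma_line emb M"
    and "L \<in> Orb"
  shows "Pi_1barC L + 2 * Pi_dC 2 L + 3 * Pi_dC 3 L = CARD('a) + 1
       \<and> Pi_dC 0 L = Pi_dC 2 L + 2 * Pi_dC 3 L
       \<and> (CARD('a) mod 3 \<noteq> 0 \<longrightarrow>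
            P_muGamma 1 L + 2 * P_T L + 3 * P_muGamma 3 L = CARD('a) + 1
          \<and> P_muGamma 0 L = P_T L + 2 * P_muGamma 3 L)"
proof -
  have En: "EnGamma_line emb L" using assms(5,6) by blast
  then have "is_line L" and noC: "\<forall>P\<in>twisted_cubic. \<not> P \<subseteq> L"
    and noG: "\<forall>E\<in>Gamma_planes. \<not> L \<subseteq> E"
    unfolding EnGamma_line_def by blast+
  then obtain u w where ind: "indep2 u w" and Lu: "L = pg_line u w" unfolding is_line_def by blast
  obtain y z where D: "det4 u w y z \<noteq> 0" using indep2_ext[OF ind] by blast
  define PL where "PL = {E. is_plane E \<and> L \<subseteq> E}"
  have PL_eq: "PL = PTs u w y z" unfolding PL_def Lu by (rule planes_through[OF ind D])
  have cardPL: "card PL = CARD('a) + 1" unfolding PL_eq by (rule card_PTs[OF ind D])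
  have le3: "nC E \<le> 3" if "E \<in> PL" for E
  proof -
    from that obtain f where "f \<noteq> vzero" "E = pg_plane f" unfolding PL_def is_plane_def by blast
    then show ?thesis using nC_le3 by blast
  qed
  have tc_pt: "\<exists>v. P = pg_point v" if "P \<in> twisted_cubic" for P :: "'a v4 set"
    using that unfolding twisted_cubic_def C_pt_def C_inf_def by blast
  have one: "card {E \<in> PL. P \<subseteq> E} = 1" if P: "P \<in> twisted_cubic" for P
  proof -
    obtain v where v: "P = pg_point v" using tc_pt[OF P] by blast
    have "v \<notin> pg_line u w" using noC P pt_sub_line Lu v by blast
    then show ?thesis unfolding PL_eq v by (rule PTs_pt[OF ind D])
  qed
  have "sum nC PL = (\<Sum>E\<in>PL. card {P \<in> twisted_cubic. P \<subseteq> E})" unfolding nC_def ..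
  also have "\<dots> = (\<Sum>P\<in>twisted_cubic. card {E \<in> PL. P \<subseteq> E})"
    by (rule sum_double_count) simp_all
  also have "\<dots> = (\<Sum>P\<in>(twisted_cubic :: 'a v4 set set). 1)" using one by simp
  also have "\<dots> = CARD('a) + 1" using card_tc by simp
  finally have sumA: "sum nC PL = CARD('a) + 1" .
  have sA: "sum nC PL = card {E\<in>PL. nC E = 1} + 2 * card {E\<in>PL. nC E = 2} + 3 * card {E\<in>PL. nC E = 3}"
   and cA: "card PL = card {E\<in>PL. nC E = 0} + card {E\<in>PL. nC E = 1} + card {E\<in>PL. nC E = 2} + card {E\<in>PL. nC E = 3}"
    using sum_split4[of PL nC] le3 by simp_all
  have Pd: "Pi_dC d L = card {E\<in>PL. nC E = d}" for d
    unfolding Pi_dC_def PL_def by (rule arg_cong[where f=card]) blast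
  have P1: "Pi_1barC L = card {E\<in>PL. nC E = 1}"
    unfolding Pi_1barC_def PL_def by (rule arg_cong[where f=card]) (use noG in blast)
  have A1: "Pi_1barC L + 2 * Pi_dC 2 L + 3 * Pi_dC 3 L = CARD('a) + 1"
    using sA sumA P1 Pd by simp
  have A2: "Pi_dC 0 L = Pi_dC 2 L + 2 * Pi_dC 3 L"
    using sA sumA cA cardPL P1 Pd by simp
  have B: "P_muGamma 1 L + 2 * P_T L + 3 * P_muGamma 3 L = CARD('a) + 1
          \<and> P_muGamma 0 L = P_T L + 2 * P_muGamma 3 L" if q3: "CARD('a) mod 3 \<noteq> 0"
  proof -
    have three: "(3::'a) \<noteq> 0" using three_ne[OF q3] .
    define QL where "QL = {P. is_point P \<and> P \<subseteq> L}"
    define mu where "mu P = card {E \<in> Gamma_planes. P \<subseteq> E}" for P :: "'a v4 set"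
    have QL_eq: "QL = LPts u w" unfolding QL_def Lu by (rule line_pts[OF ind])
    have cardQL: "card QL = CARD('a) + 1" unfolding QL_eq by (rule card_LPts[OF ind])
    have QL_nc: "P \<notin> twisted_cubic" if "P \<in> QL" for P
      using that noC unfolding QL_def by blast
    have QL_props: "mu P \<le> 3 \<and> (T_point P \<longleftrightarrow> mu P = 2)" if P: "P \<in> QL" for P
    proof -
      obtain x where x: "x \<noteq> vzero" "P = pg_point x" using P unfolding QL_def is_point_def by blast
      show ?thesis unfolding mu_def x(2) using point_props[OF three x(1)] QL_nc[OF P] x(2) by blast
    qed
    have oneB: "card {P \<in> QL. P \<subseteq> E} = 1" if E: "E \<in> Gamma_planes" for E
    proof -
      obtain g where g: "E = pg_plane g" using gamma_plane[OF E] by blast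
      have "\<not> pg_line u w \<subseteq> pg_plane g" using noG E g Lu by blast
      then show ?thesis unfolding QL_eq g by (rule LPts_plane[OF ind])
    qed
    have "sum mu QL = (\<Sum>P\<in>QL. card {E \<in> Gamma_planes. P \<subseteq> E})" unfolding mu_def ..
    also have "\<dots> = (\<Sum>E\<in>Gamma_planes. card {P \<in> QL. P \<subseteq> E})"
      by (rule sum_double_count) simp_all
    also have "\<dots> = (\<Sum>E\<in>(Gamma_planes :: 'a v4 set set). 1)" using oneB by simp
    also have "\<dots> = CARD('a) + 1" using card_Gamma by simp
    finally have sumB: "sum mu QL = CARD('a) + 1" .
    have sB: "sum mu QL = card {P\<in>QL. mu P = 1} + 2 * card {P\<in>QL. mu P = 2} + 3 * card {P\<in>QL. mu P = 3}"
     and cB: "card QL = card {P\<in>QL. mu P = 0} + card {P\<in>QL. mu P = 1} + card {P\<in>QL. mu P = 2} + card {P\<in>QL. mu P = 3}"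
      using sum_split4[of QL mu] QL_props by simp_all
    have Pk: "P_muGamma k L = card {P\<in>QL. mu P = k}" for k
      unfolding P_muGamma_def mu_Gamma_point_def
      by (rule arg_cong[where f=card]) (use QL_nc in \<open>auto simp: QL_def mu_def\<close>)
    have PT: "P_T L = card {P\<in>QL. mu P = 2}"
      unfolding P_T_def
      by (rule arg_cong[where f=card]) (use QL_props in \<open>auto simp: QL_def T_point_def\<close>)
    show ?thesis using sB sumB cB cardQL Pk PT by simp
  qed
  show ?thesis using A1 A2 B by blast
qed

end
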